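(* Let $\mathcal A$ be a set of graphs, let $\mathcal C$ be a class of connected graphs each of which is bridge-addable in $\mathcal A$, and let $R_n\in_u\mathcal A$. Then: (a) $\mathbb E[\operatorname{frag}(R_n,\mathcal C)]<2$ for each $n$ with $\mathcal A_n\ne\emptyset$; (b) for $a\in\mathbb N$, letting $\mathcal B$ be the set of graphs $G\in\mathcal A$ having a component $H\in\mathcal C$ with $a\le v(H)\le v(G)-a$, we have $\mathbb P(R_n\in\mathcal B)<2/a$ for all $n\ge 2a$ (with $\mathcal A_n\ne\emptyset$).
   Context: $\mathcal A_n$: graphs in $\mathcal A$ on vertex set $[n]$; $R_n\in_u\mathcal A$: uniform on $\mathcal A_n$. A connected graph $H$ is bridge-addable in $\mathcal A$ if whenever $G\in\mathcal A$ has a component isomorphic to $H$ and $e$ is a non-edge between that component and the rest of $G$, $G+e\in\mathcal A$. $\operatorname{Frag}(G)$ is obtained from $G$ by deleting a largest component (ties broken arbitrarily); $\operatorname{frag}(G,\mathcal C)$ is the number of vertices in the components of $\operatorname{Frag}(G)$ that are in $\mathcal C$. *)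

theory Defs
  imports Complex_Main
begin

text \<open>A (simple, labelled) graph: a vertex set of naturals and a set of 2-element edges.\<close>
type_synonym graph = "nat set \<times> nat set set"

definition verts :: "graph \<Rightarrow> nat set" where "verts G = fst G"
definition edges :: "graph \<Rightarrow> nat set set" where "edges G = snd G"

definition wf_graph :: "graph \<Rightarrow> bool" where
  "wf_graph G \<longleftrightarrow> finite (verts G) \<and>
     (\<forall>e\<in>edges G. \<exists>u v. u \<noteq> v \<and> e = {u, v} \<and> u \<in> verts G \<and> v \<in> verts G)"

definition reach :: "graph \<Rightarrow> nat \<Rightarrow> nat \<Rightarrow> bool" where
  "reach G u v \<longleftrightarrow> (u, v) \<in> {(x, y). {x, y} \<in> edges G}\<^sup>*"

definition comps :: "graph \<Rightarrow> nat set set" where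
  "comps G = (\<lambda>u. {v \<in> verts G. reach G u v}) ` verts G"

definition induced :: "graph \<Rightarrow> nat set \<Rightarrow> graph" where
  "induced G S = (S, {e \<in> edges G. e \<subseteq> S})"

definition connected_graph :: "graph \<Rightarrow> bool" where
  "connected_graph G \<longleftrightarrow> verts G \<noteq> {} \<and> (\<forall>u\<in>verts G. \<forall>v\<in>verts G. reach G u v)"

definition graph_iso :: "graph \<Rightarrow> graph \<Rightarrow> bool" where
  "graph_iso G H \<longleftrightarrow> (\<exists>f. bij_betw f (verts G) (verts H) \<and>
     (\<forall>u\<in>verts G. \<forall>v\<in>verts G. {u, v} \<in> edges G \<longleftrightarrow> {f u, f v} \<in> edges H))"

definition comp_in :: "graph set \<Rightarrow> graph \<Rightarrow> nat set \<Rightarrow> bool" where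
  "comp_in \<C> G C \<longleftrightarrow> (\<exists>H\<in>\<C>. graph_iso (induced G C) H)"

definition add_edge :: "graph \<Rightarrow> nat \<Rightarrow> nat \<Rightarrow> graph" where
  "add_edge G u v = (verts G, insert {u, v} (edges G))"

definition bridge_addable :: "graph set \<Rightarrow> graph \<Rightarrow> bool" where
  "bridge_addable \<A> H \<longleftrightarrow> (\<forall>G\<in>\<A>. \<forall>C\<in>comps G. graph_iso (induced G C) H \<longrightarrow>
      (\<forall>u\<in>C. \<forall>v\<in>verts G - C. add_edge G u v \<in> \<A>))"

definition An :: "graph set \<Rightarrow> nat \<Rightarrow> graph set" where
  "An \<A> n = {G \<in> \<A>. verts G = {1..n}}"

text \<open>A tie-breaking rule choosing a largest component of every nonempty graph.\<close>
definition largest_selector :: "(graph \<Rightarrow> nat set) \<Rightarrow> bool" where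
  "largest_selector L \<longleftrightarrow> (\<forall>G. wf_graph G \<and> verts G \<noteq> {} \<longrightarrow>
      L G \<in> comps G \<and> (\<forall>C\<in>comps G. card C \<le> card (L G)))"

definition frag :: "(graph \<Rightarrow> nat set) \<Rightarrow> graph \<Rightarrow> graph set \<Rightarrow> nat" where
  "frag L G \<C> = card (\<Union>{C \<in> comps G - {L G}. comp_in \<C> G C})"

end

theory Submission
  imports Defs
begin


definition del :: "graph \<Rightarrow> nat set \<Rightarrow> graph" where "del X e = (verts X, edges X - {e})"
definition gcomp :: "graph \<Rightarrow> nat \<Rightarrow> nat set" where "gcomp X u = {v \<in> verts X. reach X u v}"
definition bridge :: "graph \<Rightarrow> nat set \<Rightarrow> bool" where
  "bridge X e \<longleftrightarrow> e \<in> edges X \<and> (\<exists>u v. e = {u,v} \<and> \<not> reach (del X e) u v)"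
definition vroot :: "graph \<Rightarrow> nat \<Rightarrow> nat" where "vroot X w = Min (gcomp X w)"
definition bv :: "graph \<Rightarrow> nat set \<Rightarrow> nat" where
  "bv X e = (SOME w. w \<in> e \<and> \<not> reach (del X e) w (vroot X w))"

lemma verts_del[simp]: "verts (del X e) = verts X" and edges_del[simp]: "edges (del X e) = edges X - {e}"
  by (auto simp: del_def verts_def edges_def)

lemma wf_edge: assumes "wf_graph X" "e \<in> edges X" shows "e \<subseteq> verts X"
proof -
  obtain u v where "e = {u,v}" "u \<in> verts X" "v \<in> verts X"
    using assms unfolding wf_graph_def by blast
  then show ?thesis by simp
qed

lemma wf_edge2: "wf_graph X \<Longrightarrow> {u,v} \<in> edges X \<Longrightarrow> u \<in> verts X \<and> v \<in> verts X"
  using wf_edge by blast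

lemma wf_fin: "wf_graph X \<Longrightarrow> finite (verts X)" by (simp add: wf_graph_def)

lemma reach_refl[simp]: "reach X u u" by (simp add: reach_def)

lemma reach_edge: "{u,v} \<in> edges X \<Longrightarrow> reach X u v" by (auto simp: reach_def)

lemma reach_trans: "reach X u v \<Longrightarrow> reach X v w \<Longrightarrow> reach X u w"
  unfolding reach_def by (meson rtrancl_trans)

lemma reach_sym: assumes "reach X u v" shows "reach X v u"
proof -
  have "sym {(x, y). {x, y} \<in> edges X}" by (auto simp: sym_def insert_commute)
  then have "sym ({(x, y). {x, y} \<in> edges X}\<^sup>*)" by (rule sym_rtrancl)
  then show ?thesis using assms unfolding reach_def by (auto simp: sym_def)
qed

lemma reach_mono: "edges X \<subseteq> edges Y \<Longrightarrow> reach X u v \<Longrightarrow> reach Y u v"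
  unfolding reach_def by (erule rtrancl_mono[THEN subsetD, rotated]) auto

lemma reach_verts: assumes "wf_graph X" "reach X u v" shows "v = u \<or> v \<in> verts X"
  using assms(2) unfolding reach_def
proof (induction rule: rtrancl_induct)
  case base then show ?case by simp
next
  case (step y z)
  then have "z \<in> verts X" using wf_edge2[OF assms(1)] by simp
  then show ?case by simp
qed

lemma reach_split:
  assumes "reach X a b" "e = {u,v}"
  shows "reach (del X e) a b \<or> (reach (del X e) a u \<and> reach (del X e) v b)
         \<or> (reach (del X e) a v \<and> reach (del X e) u b)"
  using assms(1) unfolding reach_def[of X]
proof (induction rule: rtrancl_induct)
  case base then show ?case by simp
next
  case (step y z)
  show ?case
  proof (cases "{y,z} = e")
    case False
    then have ed: "reach (del X e) y z" using step by (intro reach_edge) auto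
    then show ?thesis using step.IH reach_trans by blast
  next
    case True
    then have "(y = u \<and> z = v) \<or> (y = v \<and> z = u)" using assms(2) by (auto simp: doubleton_eq_iff)
    then show ?thesis using step.IH by auto
  qed
qed

lemma comp_eq: "reach X u v \<Longrightarrow> gcomp X u = gcomp X v"
  unfolding gcomp_def by (meson reach_sym reach_trans)

lemma comp_sub: "gcomp X u \<subseteq> verts X" by (auto simp: gcomp_def)

lemma in_comp: "u \<in> verts X \<Longrightarrow> u \<in> gcomp X u" by (auto simp: gcomp_def)

lemma comps_comp: "comps X = gcomp X ` verts X" by (simp add: comps_def gcomp_def)

lemma comps_memb: "C \<in> comps X \<Longrightarrow> x \<in> C \<Longrightarrow> C = gcomp X x"
  unfolding comps_comp by (auto simp: gcomp_def intro!: comp_eq[unfolded gcomp_def])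

lemma bv_props:
  assumes wf: "wf_graph X" and br: "bridge X e"
  shows "bv X e \<in> e \<and> \<not> reach (del X e) (bv X e) (vroot X (bv X e))"
proof -
  obtain u v where e: "e = {u,v}" "\<not> reach (del X e) u v" "e \<in> edges X"
    using br by (auto simp: bridge_def)
  have uv: "u \<in> verts X" "v \<in> verts X" using wf_edge2[OF wf] e by auto
  have "reach X u v" using e by (simp add: reach_edge)
  then have ceq: "gcomp X u = gcomp X v" by (rule comp_eq)
  have fin: "finite (gcomp X u)" using wf_fin[OF wf] comp_sub by (meson finite_subset)
  have "vroot X u \<in> gcomp X u" unfolding vroot_def using fin in_comp[OF uv(1)] by (intro Min_in) auto
  have "\<exists>w. w \<in> e \<and> \<not> reach (del X e) w (vroot X w)"
  proof (rule ccontr)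
    assume "\<not> ?thesis"
    then have "reach (del X e) u (vroot X u)" "reach (del X e) v (vroot X v)" using e by auto
    then have "reach (del X e) u v" using ceq unfolding vroot_def by (metis reach_sym reach_trans)
    then show False using e by simp
  qed
  then show ?thesis unfolding bv_def by (rule someI_ex)
qed

lemma bridge_other:
  assumes wf: "wf_graph X" and br: "bridge X e" and w: "w \<in> e"
  obtains x where "e = {w,x}" "\<not> reach (del X e) w x" "{w,x} \<in> edges X"
proof -
  obtain u v where e: "e = {u,v}" "\<not> reach (del X e) u v" "e \<in> edges X"
    using br by (auto simp: bridge_def)
  show ?thesis
  proof (cases "w = u")
    case True then show ?thesis using that e by auto
  next
    case False then have "w = v" using e w by auto
    then show ?thesis using that[of u] e by (auto simp: insert_commute dest: reach_sym)
  qed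
qed

lemma bv_inj:
  assumes wf: "wf_graph X" and b1: "bridge X e1" and b2: "bridge X e2" and eq: "bv X e1 = bv X e2"
  shows "e1 = e2"
proof (rule ccontr)
  assume ne: "e1 \<noteq> e2"
  define w where "w = bv X e1"
  define r where "r = vroot X w"
  have p1: "w \<in> e1" "\<not> reach (del X e1) w r" using bv_props[OF wf b1] by (auto simp: w_def r_def)
  have p2: "w \<in> e2" "\<not> reach (del X e2) w r" using bv_props[OF wf b2] eq by (auto simp: w_def r_def)
  obtain x1 where x1: "e1 = {w,x1}" "\<not> reach (del X e1) w x1" "{w,x1} \<in> edges X"
    using bridge_other[OF wf b1 p1(1)] by blast
  obtain x2 where x2: "e2 = {w,x2}" "\<not> reach (del X e2) w x2" "{w,x2} \<in> edges X"
    using bridge_other[OF wf b2 p2(1)] by blast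
  have wv: "w \<in> verts X" using wf_edge2[OF wf x1(3)] by simp
  have fin: "finite (gcomp X w)" using wf_fin[OF wf] comp_sub by (meson finite_subset)
  have "r \<in> gcomp X w" unfolding r_def vroot_def using fin in_comp[OF wv] by (intro Min_in) auto
  then have "reach X w r" by (simp add: gcomp_def)
  moreover have "reach X x1 w" using x1(3) by (simp add: reach_edge reach_sym)
  ultimately have "reach X x1 r" using reach_trans by blast
  from reach_split[OF this x1(1)]
  have "reach (del X e1) x1 r" using p1 x1(2) by (meson reach_sym)
  from reach_split[OF this x2(1)]
  have A: "reach (del (del X e1) e2) x1 r \<or> reach (del (del X e1) e2) x1 w
     \<or> (reach (del (del X e1) e2) x1 x2 \<and> reach (del (del X e1) e2) w r)" by blast
  have sub: "edges (del (del X e1) e2) \<subseteq> edges (del X e1)" by auto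
  have "reach (del (del X e1) e2) x1 r"
    using A reach_mono[OF sub] p1 x1(2) reach_sym by blast
  then have "reach (del X e2) x1 r" by (rule reach_mono[rotated]) auto
  moreover have "reach (del X e2) w x1" using x1 ne by (intro reach_edge) auto
  ultimately have "reach (del X e2) w r" using reach_trans by blast
  then show False using p2 by simp
qed

lemma bv_range:
  assumes wf: "wf_graph X" and br: "bridge X e" and V: "verts X = {1..n}"
  shows "bv X e \<in> {2..n}"
proof -
  have p: "bv X e \<in> e" "\<not> reach (del X e) (bv X e) (vroot X (bv X e))" using bv_props[OF wf br] by auto
  have "e \<subseteq> verts X" using wf br wf_edge unfolding bridge_def by blast
  then have inV: "bv X e \<in> {1..n}" using p V by auto
  have "bv X e \<noteq> 1"
  proof
    assume h: "bv X e = 1"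
    have fin: "finite (gcomp X 1)" using V comp_sub by (metis finite_atLeastAtMost finite_subset)
    have "1 \<in> gcomp X 1" using inV h V by (intro in_comp) auto
    moreover have "\<forall>y\<in>gcomp X 1. 1 \<le> y" using comp_sub V by fastforce
    ultimately have "vroot X 1 = 1" unfolding vroot_def using fin
      by (metis Min_eqI)
    then show False using p h by simp
  qed
  then show ?thesis using inV by auto
qed

lemma T_bound:
  assumes G: "\<forall>X\<in>AA. wf_graph X \<and> verts X = {1..n}" and fin: "finite AA"
    and T: "T \<subseteq> Sigma AA (\<lambda>X. {e. bridge X e})"
  shows "card T \<le> (n - 1) * card AA"
proof -
  define h where "h = (\<lambda>(X, e). (X, bv X e))"
  have "inj_on h T"
  proof (rule inj_onI)
    fix p q assume pq: "p \<in> T" "q \<in> T" "h p = h q"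
    obtain X e where p: "p = (X, e)" by (cases p)
    obtain Y f where q: "q = (Y, f)" by (cases q)
    have XY: "X = Y" "bv X e = bv X f" using pq(3) p q by (auto simp: h_def)
    have "X \<in> AA" "bridge X e" "bridge X f" using pq T p q XY by auto
    then have "e = f" using bv_inj G XY by blast
    then show "p = q" using p q XY by simp
  qed
  moreover have "h ` T \<subseteq> AA \<times> {2..n}"
  proof
    fix z assume "z \<in> h ` T"
    then obtain X e where "(X, e) \<in> T" "z = (X, bv X e)" by (auto simp: h_def)
    moreover have "X \<in> AA" "bridge X e" using T calculation by auto
    moreover have "bv X e \<in> {2..n}" using G calculation(3,4) by (intro bv_range) auto
    ultimately show "z \<in> AA \<times> {2..n}" by simp
  qed
  ultimately have "card T \<le> card (AA \<times> {2..n})"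
    by (metis card_image card_mono fin finite_SigmaI finite_atLeastAtMost)
  then show ?thesis by (simp add: card_cartesian_product mult.commute)
qed



lemma verts_add[simp]: "verts (add_edge G u v) = verts G"
  and edges_add[simp]: "edges (add_edge G u v) = insert {u,v} (edges G)"
  by (auto simp: add_edge_def verts_def edges_def)

lemma graph_eq: "verts X = verts Y \<Longrightarrow> edges X = edges Y \<Longrightarrow> X = Y"
  by (simp add: verts_def edges_def prod_eq_iff)

lemma add_bridge:
  assumes C: "C \<in> comps G" "u \<in> C" and v: "v \<in> verts G - C"
  shows "\<not> reach G u v" "{u,v} \<notin> edges G" "del (add_edge G u v) {u,v} = G"
        "bridge (add_edge G u v) {u,v}"
proof -
  have Cu: "C = gcomp G u" using comps_memb C by blast
  show nr: "\<not> reach G u v" using v Cu by (auto simp: gcomp_def)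
  show ne: "{u,v} \<notin> edges G" using nr reach_edge by blast
  show d: "del (add_edge G u v) {u,v} = G" using ne by (intro graph_eq) auto
  show "bridge (add_edge G u v) {u,v}" unfolding bridge_def using d nr by auto
qed

lemma add_inj:
  assumes "add_edge G u v = add_edge G' u' v'" "{u,v} = {u',v'}"
    "del (add_edge G u v) {u,v} = G" "del (add_edge G' u' v') {u',v'} = G'"
  shows "G = G'"
proof -
  have "G = del (add_edge G u v) {u,v}" using assms(3) by simp
  also have "\<dots> = del (add_edge G' u' v') {u',v'}" using assms(1,2) by simp
  finally show ?thesis using assms(4) by simp
qed

lemma ba_use:
  assumes C_ba: "\<forall>H\<in>CC. bridge_addable AA H" and G: "G \<in> AA" and C: "C \<in> comps G"
    and ci: "comp_in CC G C" and u: "u \<in> C" and v: "v \<in> verts G - C"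
  shows "add_edge G u v \<in> AA"
proof -
  obtain H where "H \<in> CC" "graph_iso (induced G C) H" using ci by (auto simp: comp_in_def)
  then show ?thesis using C_ba G C u v unfolding bridge_addable_def by blast
qed

lemma An_fin:
  assumes A_wf: "\<forall>G\<in>AA. wf_graph G" shows "finite (An AA n)"
proof -
  have "An AA n \<subseteq> {{1..n}} \<times> Pow (Pow {1..n})"
  proof
    fix G assume G: "G \<in> An AA n"
    then have "verts G = {1..n}" "wf_graph G" using A_wf by (auto simp: An_def)
    moreover have "edges G \<subseteq> Pow (verts G)" using wf_edge[OF \<open>wf_graph G\<close>] by blast
    ultimately have "fst G = {1..n}" "snd G \<subseteq> Pow {1..n}"
      by (auto simp: verts_def edges_def)
    then show "G \<in> {{1..n}} \<times> Pow (Pow {1..n})" by (cases G) auto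
  qed
  then show ?thesis by (rule finite_subset) auto
qed

lemma kn_bound:
  fixes a k n :: nat
  assumes "a \<le> k" "k \<le> n - a" "2 * a \<le> n"
  shows "a * (n - a) \<le> k * (n - k)"
proof -
  define d where "d = k - a"
  define m where "m = n - k"
  have d: "k = a + d" using assms(1) d_def by simp
  have m: "n = k + m" using assms m_def by simp
  have "a \<le> m" using assms m by linarith
  have "a * (n - a) = a * m + a * d" using d m by (simp add: algebra_simps)
  also have "\<dots> \<le> a * m + d * m" using \<open>a \<le> m\<close> by (simp add: mult.commute)
  also have "\<dots> = k * (n - k)" using d m by (simp add: algebra_simps)
  finally show ?thesis .
qed



lemma frag_count:
  fixes G :: graph and L CC and n :: nat
  assumes wf: "wf_graph G" and V: "verts G = {1..n}" and n: "n \<ge> 1" and LS: "largest_selector L"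
  defines "Q \<equiv> \<Union>{C \<in> comps G - {L G}. comp_in CC G C}"
  defines "D \<equiv> {(u,v). u \<in> Q \<and> v \<in> verts G \<and> \<not> reach G u v \<and> (v \<notin> Q \<or> u < v)}"
  shows "n * card Q \<le> 2 * card D"
proof -
  have ne: "verts G \<noteq> {}" using V n by auto
  have LG: "L G \<in> comps G" "\<forall>C\<in>comps G. card C \<le> card (L G)"
    using LS wf ne unfolding largest_selector_def by blast+
  have finV: "finite (verts G)" using V by simp
  have compsV: "\<And>C. C \<in> comps G \<Longrightarrow> C \<subseteq> verts G" using comp_sub[of G] by (auto simp: comps_comp)
  have Qsub: "Q \<subseteq> verts G" unfolding Q_def using compsV by blast
  have compQ: "gcomp G u \<subseteq> Q \<and> card (gcomp G u) \<le> card (L G)" if u: "u \<in> Q" for u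
  proof -
    obtain C where C: "C \<in> comps G" "C \<noteq> L G" "comp_in CC G C" "u \<in> C" using u unfolding Q_def by blast
    have "C = gcomp G u" using comps_memb C by blast
    then show ?thesis using C LG unfolding Q_def by blast
  qed
  have disj: "Q \<inter> L G = {}"
  proof (rule ccontr)
    assume "Q \<inter> L G \<noteq> {}"
    then obtain u where u: "u \<in> Q" "u \<in> L G" by blast
    obtain C where C: "C \<in> comps G" "C \<noteq> L G" "u \<in> C" using u unfolding Q_def by blast
    have "C = gcomp G u" "L G = gcomp G u" using comps_memb C LG u by blast+
    then show False using C by simp
  qed
  define q where "q = card Q"
  define l where "l = card (L G)"
  have finQ: "finite Q" using Qsub finV finite_subset by blast
  have finL: "finite (L G)" using compsV LG finV finite_subset by blast
  have "q + l = card (Q \<union> L G)" unfolding q_def l_def using disj finQ finL by (simp add: card_Un_disjoint)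
  also have "\<dots> \<le> n" using Qsub compsV[OF LG(1)] V by (metis card_atLeastAtMost card_mono finV le_sup_iff diff_Suc_1)
  finally have ql: "q + l \<le> n" .
  define Ob where "Ob = Sigma Q (\<lambda>u. verts G - gcomp G u)"
  have O_alt: "Ob = {(u,v). u \<in> Q \<and> v \<in> verts G \<and> \<not> reach G u v}"
    unfolding Ob_def gcomp_def by auto
  have "card Ob = (\<Sum>u\<in>Q. card (verts G - gcomp G u))" unfolding Ob_def using finQ finV by simp
  also have "\<dots> = (\<Sum>u\<in>Q. n - card (gcomp G u))"
  proof (intro sum.cong refl)
    fix u
    have "gcomp G u \<subseteq> verts G" by (rule comp_sub)
    moreover then have "finite (gcomp G u)" using finV finite_subset by blast
    ultimately show "card (verts G - gcomp G u) = n - card (gcomp G u)" using V by (simp add: card_Diff_subset)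
  qed
  finally have cO: "card Ob = (\<Sum>u\<in>Q. n - card (gcomp G u))" .
  have "(\<Sum>u\<in>Q. n - l) \<le> (\<Sum>u\<in>Q. n - card (gcomp G u))"
    using compQ unfolding l_def by (intro sum_mono) (simp add: diff_le_mono2)
  then have cO2: "q * (n - l) \<le> card Ob" using cO q_def by simp
  define O1 where "O1 = Q \<times> (verts G - Q)"
  define O2 where "O2 = {(u,v). (u,v) \<in> Ob \<and> v \<in> Q \<and> u < v}"
  define O3 where "O3 = {(u,v). (u,v) \<in> Ob \<and> v \<in> Q \<and> v < u}"
  have O1sub: "O1 \<subseteq> Ob"
  proof
    fix p assume "p \<in> O1"
    then obtain u v where p: "p = (u,v)" "u \<in> Q" "v \<in> verts G" "v \<notin> Q" unfolding O1_def by blast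
    have "\<not> reach G u v" using compQ[OF p(2)] p(3,4) by (auto simp: gcomp_def)
    then show "p \<in> Ob" using p O_alt by simp
  qed
  have Oeq: "Ob = O1 \<union> O2 \<union> O3"
  proof
    show "Ob \<subseteq> O1 \<union> O2 \<union> O3"
    proof
      fix p assume pO: "p \<in> Ob"
      then obtain u v where p: "p = (u,v)" "u \<in> Q" "v \<in> verts G" "\<not> reach G u v" using O_alt by blast
      have "u \<noteq> v" using p by auto
      then show "p \<in> O1 \<union> O2 \<union> O3" using p pO unfolding O1_def O2_def O3_def by auto
    qed
    show "O1 \<union> O2 \<union> O3 \<subseteq> Ob" using O1sub unfolding O2_def O3_def by auto
  qed
  have finO: "finite Ob" unfolding Ob_def using finQ finV by simp
  have fin1: "finite O1" "finite O2" "finite O3" using Oeq finO by (metis finite_Un)+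
  have d12: "O1 \<inter> O2 = {}" "(O1 \<union> O2) \<inter> O3 = {}" unfolding O1_def O2_def O3_def by auto
  have cOs: "card Ob = card O1 + card O2 + card O3"
    using Oeq d12 fin1 by (simp add: card_Un_disjoint)
  have swap: "(\<lambda>(u,v). (v,u)) ` O2 = O3"
  proof
    show "(\<lambda>(u,v). (v,u)) ` O2 \<subseteq> O3"
      unfolding O2_def O3_def O_alt using Qsub by (auto dest: reach_sym)
    show "O3 \<subseteq> (\<lambda>(u,v). (v,u)) ` O2"
    proof
      fix p assume "p \<in> O3"
      then obtain u v where p: "p = (u,v)" "u \<in> Q" "v \<in> Q" "\<not> reach G u v" "v < u"
        unfolding O3_def O_alt by blast
      have "(v,u) \<in> O2" using p Qsub unfolding O2_def O_alt by (auto dest: reach_sym)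
      then show "p \<in> (\<lambda>(u,v). (v,u)) ` O2" using p by force
    qed
  qed
  have "inj_on (\<lambda>(u,v). (v,u)) O2" by (auto simp: inj_on_def)
  then have c23: "card O3 = card O2" using swap card_image by fastforce
  have Deq: "D = O1 \<union> O2"
  proof
    show "D \<subseteq> O1 \<union> O2" unfolding D_def O1_def O2_def O_alt by auto
    show "O1 \<union> O2 \<subseteq> D" using O1sub unfolding D_def O1_def O2_def O_alt by auto
  qed
  have cD: "card D = card O1 + card O2" using Deq d12 fin1 by (simp add: card_Un_disjoint)
  have cO1: "card O1 = q * (n - q)" unfolding O1_def q_def using finQ finV Qsub V
    by (simp add: card_cartesian_product card_Diff_subset)
  have "2 * card D = card O1 + card Ob" using cD cOs c23 by simp
  moreover have "q * l \<le> q * (n - q)" using ql by (intro mult_le_mono2) linarith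
  moreover have "q * l + q * (n - l) = q * n" using ql by (simp add: add_mult_distrib2[symmetric])
  ultimately have "q * n \<le> 2 * card D" using cO2 cO1 by linarith
  then show ?thesis unfolding q_def by (simp add: mult.commute)
qed



lemma partA:
  fixes AA CC :: "graph set"
  assumes A_wf: "\<forall>G\<in>AA. wf_graph G" and C_ba: "\<forall>H\<in>CC. bridge_addable AA H"
    and LS: "largest_selector L" and ne: "An AA n \<noteq> {}"
  shows "(\<Sum>G\<in>An AA n. real (frag L G CC)) / real (card (An AA n)) < 2"
proof -
  let ?A = "An AA n"
  have fin: "finite ?A" by (rule An_fin[OF A_wf])
  have cpos: "card ?A > 0" using fin ne by (simp add: card_gt_0_iff)
  have Gp: "wf_graph G \<and> verts G = {1..n} \<and> G \<in> AA" if "G \<in> ?A" for G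
    using A_wf that by (auto simp: An_def)
  show ?thesis
  proof (cases "n = 0")
    case True
    then have "frag L G CC = 0" if "G \<in> ?A" for G using Gp[OF that] by (simp add: frag_def comps_def)
    then show ?thesis by simp
  next
    case False
    then have n: "n \<ge> 1" by simp
    define Q where "Q G = \<Union>{C \<in> comps G - {L G}. comp_in CC G C}" for G
    define D where "D G = {(u,v). u \<in> Q G \<and> v \<in> verts G \<and> \<not> reach G u v \<and> (v \<notin> Q G \<or> u < v)}" for G
    have fragQ: "frag L G CC = card (Q G)" for G by (simp add: frag_def Q_def)
    have cnt: "n * card (Q G) \<le> 2 * card (D G)" if "G \<in> ?A" for G
      using frag_count[of G n L CC] Gp[OF that] n LS unfolding Q_def D_def by blast
    have Dprop: "\<exists>C. C \<in> comps G \<and> comp_in CC G C \<and> u \<in> C \<and> v \<in> verts G - C"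
      if "(u,v) \<in> D G" for G u v
    proof -
      from that have u: "u \<in> Q G" "v \<in> verts G" "\<not> reach G u v" by (auto simp: D_def)
      obtain C where C: "C \<in> comps G" "comp_in CC G C" "u \<in> C" using u(1) by (auto simp: Q_def)
      have "C = gcomp G u" using comps_memb C by blast
      then have "v \<notin> C" using u by (auto simp: gcomp_def)
      then show ?thesis using C u by blast
    qed
    define h where "h = (\<lambda>(G::graph, (u::nat, v::nat)). (add_edge G u v, {u,v}))"
    define S where "S = Sigma ?A D"
    have inj: "inj_on h S"
    proof (rule inj_onI)
      fix p p' assume pp: "p \<in> S" "p' \<in> S" "h p = h p'"
      obtain G u v where p: "p = (G,(u,v))" by (cases p) auto
      obtain G' u' v' where p': "p' = (G',(u',v'))" by (cases p') auto
      have m: "G \<in> ?A" "(u,v) \<in> D G" "G' \<in> ?A" "(u',v') \<in> D G'" using pp p p' by (auto simp: S_def)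
      obtain C where C: "C \<in> comps G" "u \<in> C" "v \<in> verts G - C" using Dprop[OF m(2)] by blast
      obtain C' where C': "C' \<in> comps G'" "u' \<in> C'" "v' \<in> verts G' - C'" using Dprop[OF m(4)] by blast
      have eq: "add_edge G u v = add_edge G' u' v'" "{u,v} = {u',v'}" using pp(3) p p' by (auto simp: h_def)
      have GG: "G = G'" using add_inj[OF eq add_bridge(3)[OF C] add_bridge(3)[OF C']] .
      have "(u = u' \<and> v = v') \<or> (u = v' \<and> v = u')" using eq(2) by (auto simp: doubleton_eq_iff)
      moreover have "\<not> (u = v' \<and> v = u')"
      proof
        assume s: "u = v' \<and> v = u'"
        have "u \<in> Q G" "v \<in> Q G" "(v \<notin> Q G \<or> u < v)" "(u \<notin> Q G \<or> v < u)"
          using m GG s by (auto simp: D_def)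
        then show False by auto
      qed
      ultimately show "p = p'" using p p' GG by auto
    qed
    have Tsub: "h ` S \<subseteq> Sigma ?A (\<lambda>X. {e. bridge X e})"
    proof
      fix z assume "z \<in> h ` S"
      then obtain G u v where z: "z = (add_edge G u v, {u,v})" "G \<in> ?A" "(u,v) \<in> D G"
        by (auto simp: h_def S_def)
      obtain C where C: "C \<in> comps G" "comp_in CC G C" "u \<in> C" "v \<in> verts G - C"
        using Dprop[OF z(3)] by blast
      have "add_edge G u v \<in> AA" using ba_use[OF C_ba _ C(1,2,3,4)] Gp[OF z(2)] by blast
      then have "add_edge G u v \<in> ?A" using Gp[OF z(2)] by (simp add: An_def)
      then show "z \<in> Sigma ?A (\<lambda>X. {e. bridge X e})" using z add_bridge(4)[OF C(1,3,4)] by simp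
    qed
    have "card (h ` S) \<le> (n - 1) * card ?A"
      using T_bound[OF _ fin Tsub] Gp by blast
    then have cS: "card S \<le> (n - 1) * card ?A" using card_image[OF inj] by simp
    have finD: "finite (D G)" if "G \<in> ?A" for G
    proof -
      have "Q G \<subseteq> verts G" using comp_sub[of G] by (auto simp: Q_def comps_comp)
      then have "D G \<subseteq> verts G \<times> verts G" by (auto simp: D_def)
      then show ?thesis using Gp[OF that] by (metis finite_SigmaI finite_atLeastAtMost finite_subset)
    qed
    have "card S = (\<Sum>G\<in>?A. card (D G))" unfolding S_def using fin finD by simp
    moreover have "(\<Sum>G\<in>?A. n * card (Q G)) \<le> (\<Sum>G\<in>?A. 2 * card (D G))"
      by (intro sum_mono cnt)
    ultimately have "n * (\<Sum>G\<in>?A. card (Q G)) \<le> 2 * ((n - 1) * card ?A)"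
      using cS by (simp add: sum_distrib_left[symmetric])
    then have "real n * real (\<Sum>G\<in>?A. card (Q G)) \<le> 2 * ((real n - 1) * real (card ?A))"
      using n by (metis (mono_tags, lifting) of_nat_1 of_nat_diff of_nat_le_iff of_nat_mult of_nat_numeral)
    also have "\<dots> < 2 * (real n * real (card ?A))" using cpos by simp
    finally have "real (\<Sum>G\<in>?A. card (Q G)) < 2 * real (card ?A)" using n by (simp add: mult.left_commute)
    moreover have "(\<Sum>G\<in>?A. real (frag L G CC)) = real (\<Sum>G\<in>?A. card (Q G))" by (simp add: fragQ)
    ultimately show ?thesis using cpos by (simp add: divide_less_eq)
  qed
qed



lemma partB:
  fixes AA CC :: "graph set" and a n :: nat
  assumes A_wf: "\<forall>G\<in>AA. wf_graph G" and C_ba: "\<forall>H\<in>CC. bridge_addable AA H"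
    and a: "a \<ge> 1" and an: "n \<ge> 2 * a" and ne: "An AA n \<noteq> {}"
  shows "real (card {G \<in> An AA n. \<exists>C\<in>comps G. comp_in CC G C \<and> a \<le> card C \<and>
                                      card C \<le> card (verts G) - a})
          / real (card (An AA n)) < 2 / real a"
proof -
  let ?A = "An AA n"
  define B where "B = {G \<in> An AA n. \<exists>C\<in>comps G. comp_in CC G C \<and> a \<le> card C \<and>
                                      card C \<le> card (verts G) - a}"
  have fin: "finite ?A" by (rule An_fin[OF A_wf])
  have cpos: "card ?A > 0" using fin ne by (simp add: card_gt_0_iff)
  have Gp: "wf_graph G \<and> verts G = {1..n} \<and> G \<in> AA" if "G \<in> ?A" for G
    using A_wf that by (auto simp: An_def)
  define P where "P G C \<longleftrightarrow> C \<in> comps G \<and> comp_in CC G C \<and> a \<le> card C \<and> card C \<le> n - a" for G C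
  define CB where "CB G = (SOME C. P G C)" for G
  have PB: "P G (CB G)" if "G \<in> B" for G
  proof -
    have "\<exists>C. P G C" using that Gp[of G] unfolding B_def P_def by auto
    then show ?thesis unfolding CB_def by (rule someI_ex)
  qed
  have BA: "B \<subseteq> ?A" by (auto simp: B_def)
  define E where "E G = CB G \<times> (verts G - CB G)" for G
  define h where "h = (\<lambda>(G::graph, (u::nat, v::nat)). (add_edge G u v, {u,v}))"
  define S where "S = Sigma B E"
  have inj: "inj_on h S"
  proof (rule inj_onI)
    fix p p' assume pp: "p \<in> S" "p' \<in> S" "h p = h p'"
    obtain G u v where p: "p = (G,(u,v))" by (cases p) auto
    obtain G' u' v' where p': "p' = (G',(u',v'))" by (cases p') auto
    have m: "G \<in> B" "(u,v) \<in> E G" "G' \<in> B" "(u',v') \<in> E G'" using pp p p' by (auto simp: S_def)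
    have C: "CB G \<in> comps G" "u \<in> CB G" "v \<in> verts G - CB G" using m(1,2) PB[of G] by (auto simp: E_def P_def)
    have C': "CB G' \<in> comps G'" "u' \<in> CB G'" "v' \<in> verts G' - CB G'" using m(3,4) PB[of G'] by (auto simp: E_def P_def)
    have eq: "add_edge G u v = add_edge G' u' v'" "{u,v} = {u',v'}" using pp(3) p p' by (auto simp: h_def)
    have GG: "G = G'" using add_inj[OF eq add_bridge(3)[OF C] add_bridge(3)[OF C']] .
    have "(u = u' \<and> v = v') \<or> (u = v' \<and> v = u')" using eq(2) by (auto simp: doubleton_eq_iff)
    moreover have "\<not> (u = v' \<and> v = u')" using C C' GG by auto
    ultimately show "p = p'" using p p' GG by auto
  qed
  have Tsub: "h ` S \<subseteq> Sigma ?A (\<lambda>X. {e. bridge X e})"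
  proof
    fix z assume "z \<in> h ` S"
    then obtain G u v where z: "z = (add_edge G u v, {u,v})" "G \<in> B" "(u,v) \<in> E G"
      by (auto simp: h_def S_def)
    have GA: "G \<in> ?A" using z BA by auto
    have C: "CB G \<in> comps G" "comp_in CC G (CB G)" "u \<in> CB G" "v \<in> verts G - CB G"
      using z(2,3) PB[of G] by (auto simp: E_def P_def)
    have "add_edge G u v \<in> AA" using ba_use[OF C_ba _ C(1,2,3,4)] Gp[OF GA] by blast
    then have "add_edge G u v \<in> ?A" using Gp[OF GA] by (simp add: An_def)
    then show "z \<in> Sigma ?A (\<lambda>X. {e. bridge X e})" using z add_bridge(4)[OF C(1,3,4)] by simp
  qed
  have "card (h ` S) \<le> (n - 1) * card ?A"
    using T_bound[OF _ fin Tsub] Gp by blast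
  then have cS: "card S \<le> (n - 1) * card ?A" using card_image[OF inj] by simp
  have cE: "a * (n - a) \<le> card (E G)" "finite (E G)" if "G \<in> B" for G
  proof -
    have GA: "G \<in> ?A" using that BA by auto
    have P: "P G (CB G)" by (rule PB[OF that])
    have sub: "CB G \<subseteq> verts G" using P comp_sub[of G] by (auto simp: P_def comps_comp)
    have fv: "finite (verts G)" using Gp[OF GA] by simp
    have fc: "finite (CB G)" using sub fv finite_subset by blast
    have "card (E G) = card (CB G) * (n - card (CB G))"
      unfolding E_def using sub fv fc Gp[OF GA] by (simp add: card_cartesian_product card_Diff_subset)
    moreover have "a * (n - a) \<le> card (CB G) * (n - card (CB G))"
      using P an by (intro kn_bound) (auto simp: P_def)
    ultimately show "a * (n - a) \<le> card (E G)" by simp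
    show "finite (E G)" unfolding E_def using fv fc by simp
  qed
  have finB: "finite B" using BA fin finite_subset by blast
  have "card S = (\<Sum>G\<in>B. card (E G))" unfolding S_def using finB cE(2) by simp
  moreover have "(\<Sum>G\<in>B. a * (n - a)) \<le> (\<Sum>G\<in>B. card (E G))" by (intro sum_mono cE(1))
  ultimately have key: "card B * (a * (n - a)) \<le> (n - 1) * card ?A" using cS by simp
  have lt: "card B * a < 2 * card ?A"
  proof (rule ccontr)
    assume "\<not> ?thesis"
    then have "2 * card ?A \<le> card B * a" by simp
    then have "2 * card ?A * (n - a) \<le> card B * a * (n - a)" by (rule mult_le_mono1)
    also have "\<dots> \<le> (n - 1) * card ?A" using key by (simp add: mult.assoc)
    finally have "2 * (n - a) * card ?A \<le> (n - 1) * card ?A" by (simp add: mult.commute mult.left_commute)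
    then have "2 * (n - a) \<le> n - 1" using cpos by simp
    then show False using an a by linarith
  qed
  then have "real (card B) * real a < 2 * real (card ?A)"
    by (metis of_nat_less_iff of_nat_mult of_nat_numeral)
  then have "real (card B) / real (card ?A) < 2 / real a" using cpos a
    by (simp add: divide_less_eq field_simps)
  then show ?thesis unfolding B_def .
qed

theorem lemma5p1:
  fixes \<A> \<C> :: "graph set"
  assumes A_wf: "\<forall>G\<in>\<A>. wf_graph G"
    and C_wf: "\<forall>H\<in>\<C>. wf_graph H \<and> connected_graph H"
    and C_ba: "\<forall>H\<in>\<C>. bridge_addable \<A> H"
  shows
    "(\<forall>L n. largest_selector L \<and> An \<A> n \<noteq> {} \<longrightarrow>
        (\<Sum>G\<in>An \<A> n. real (frag L G \<C>)) / real (card (An \<A> n)) < 2)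
     \<and>
     (\<forall>a n. a \<ge> 1 \<and> n \<ge> 2 * a \<and> An \<A> n \<noteq> {} \<longrightarrow>
        real (card {G \<in> An \<A> n. \<exists>C\<in>comps G. comp_in \<C> G C \<and> a \<le> card C \<and>
                                      card C \<le> card (verts G) - a})
          / real (card (An \<A> n)) < 2 / real a)"
  using partA[OF A_wf C_ba] partB[OF A_wf C_ba] by blast

end
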